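(* Let $f:\mathbb{R}^d\times\mathcal{P}\to\mathbb{R}^d$, differentiable in its first argument, and for each $N\ge1$ let $\theta_0^N,\dots,\theta_{N-1}^N\in\mathcal{P}$. Assume there exist constants $C_f,L_f$ such that for all $N$ and $n$, $\sup_{x\in\mathbb{R}^d}\|f(x,\theta_n^N)\|\le C_f$ and $\sup_{x\in\mathbb{R}^d}\|\partial_x f(x,\theta_n^N)\|\le L_f$. Given $x_0\in\mathbb{R}^d$, define the forward iterates $x_{n+1}=x_n+\frac1N f(x_n,\theta_n^N)$ for $n=0,\dots,N-1$, and the reconstructed iterates $\tilde x_N=x_N$, $\tilde x_n=\tilde x_{n+1}-\frac1N f(\tilde x_{n+1},\theta_n^N)$ for $n=N-1,\dots,0$. Then, for all $n$, $$\|x_n-\tilde x_n\|\le\frac{(e^{L_f}-1)C_f}{N}+O\Big(\frac1{N^2}\Big).$$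
   Context: $\mathcal{P}$ is a parameter set; $\partial_x f(x,\theta)$ is the Jacobian of $f(\cdot,\theta)$ at $x$. *)

theory Defs
  imports "HOL-Analysis.Analysis"
begin

primrec fwd_iter :: "('v::real_vector \<Rightarrow> 'p \<Rightarrow> 'v) \<Rightarrow> (nat \<Rightarrow> 'p) \<Rightarrow> nat \<Rightarrow> 'v \<Rightarrow> nat \<Rightarrow> 'v" where
  "fwd_iter f th N x0 0 = x0"
| "fwd_iter f th N x0 (Suc n) =
     fwd_iter f th N x0 n + (1 / real N) *\<^sub>R f (fwd_iter f th N x0 n) (th n)"

text \<open>Backward reconstruction after k steps from x_N: value of tilde x_(N-k).\<close>
primrec bwd_aux :: "('v::real_vector \<Rightarrow> 'p \<Rightarrow> 'v) \<Rightarrow> (nat \<Rightarrow> 'p) \<Rightarrow> nat \<Rightarrow> 'v \<Rightarrow> nat \<Rightarrow> 'v" where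
  "bwd_aux f th N x0 0 = fwd_iter f th N x0 N"
| "bwd_aux f th N x0 (Suc k) =
     bwd_aux f th N x0 k - (1 / real N) *\<^sub>R f (bwd_aux f th N x0 k) (th (N - Suc k))"

definition rec_iter :: "('v::real_vector \<Rightarrow> 'p \<Rightarrow> 'v) \<Rightarrow> (nat \<Rightarrow> 'p) \<Rightarrow> nat \<Rightarrow> 'v \<Rightarrow> nat \<Rightarrow> 'v" where
  "rec_iter f th N x0 n = bwd_aux f th N x0 (N - n)"

end

theory Submission
  imports Defs
begin

theorem proposition3:
  fixes f :: "real ^ 'd \<Rightarrow> 'p \<Rightarrow> real ^ 'd"
    and f' :: "'p \<Rightarrow> real ^ 'd \<Rightarrow> (real ^ 'd \<Rightarrow> real ^ 'd)"
    and \<theta> :: "nat \<Rightarrow> nat \<Rightarrow> 'p"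
    and Cf Lf :: real
    and x0 :: "real ^ 'd"
  assumes deriv: "\<And>p x. ((\<lambda>y. f y p) has_derivative f' p x) (at x)"
    and bound_f: "\<And>N n x. N \<ge> 1 \<Longrightarrow> n < N \<Longrightarrow> norm (f x (\<theta> N n)) \<le> Cf"
    and bound_Df: "\<And>N n x. N \<ge> 1 \<Longrightarrow> n < N \<Longrightarrow> onorm (f' (\<theta> N n) x) \<le> Lf"
  shows "\<exists>K. \<forall>N\<ge>1. \<forall>n\<le>N.
           norm (fwd_iter f (\<theta> N) N x0 n - rec_iter f (\<theta> N) N x0 n)
             \<le> (exp Lf - 1) * Cf / real N + K / (real N)^2"
proof (intro exI[of _ 0] allI impI)
  fix N n :: nat
  assume N: "N \<ge> 1" and nN: "n \<le> N"
  have L0: "0 \<le> Lf"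
  proof -
    have "bounded_linear (f' (\<theta> 1 0) x0)" using deriv has_derivative_bounded_linear by blast
    then have "0 \<le> onorm (f' (\<theta> 1 0) x0)" by (rule onorm_pos_le)
    also have "\<dots> \<le> Lf" using bound_Df[of 1 0 x0] by simp
    finally show ?thesis .
  qed
  have C0: "0 \<le> Cf" using bound_f[of 1 0 x0] by (meson dual_order.trans le_refl norm_ge_zero zero_less_one)
  define h where "h = 1 / real N"
  have h0: "h > 0" using N by (simp add: h_def)
  have lip: "norm (f x (\<theta> N m) - f y (\<theta> N m)) \<le> Lf * norm (x - y)" if "m < N" for x y m
  proof -
    have "\<forall>z\<in>UNIV. ((\<lambda>y. f y (\<theta> N m)) has_derivative f' (\<theta> N m) z) (at z within UNIV)"
      using deriv by simp
    moreover have "\<forall>z\<in>UNIV. onorm (f' (\<theta> N m) z) \<le> Lf" using bound_Df N that by blast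
    ultimately show ?thesis using differentiable_bound[of UNIV "\<lambda>y. f y (\<theta> N m)" "f' (\<theta> N m)" Lf x y] by auto
  qed
  let ?F = "fwd_iter f (\<theta> N) N x0"
  let ?B = "bwd_aux f (\<theta> N) N x0"
  have main: "k \<le> N \<Longrightarrow> norm (?F (N - k) - ?B k) \<le> h * Cf * ((1 + h * Lf) ^ k - 1)" for k
  proof (induction k)
    case 0
    then show ?case by simp
  next
    case (Suc k)
    define m where "m = N - Suc k"
    have mN: "m < N" using Suc.prems by (simp add: m_def)
    have Sm: "Suc m = N - k" using Suc.prems by (simp add: m_def)
    have IH: "norm (?F (Suc m) - ?B k) \<le> h * Cf * ((1 + h * Lf) ^ k - 1)"
      using Suc Sm by simp
    have Fs: "?F (Suc m) = ?F m + h *\<^sub>R f (?F m) (\<theta> N m)" by (simp add: h_def)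
    have Bs: "?B (Suc k) = ?B k - h *\<^sub>R f (?B k) (\<theta> N m)" by (simp add: h_def m_def)
    have eq: "?F m - ?B (Suc k) = (?F (Suc m) - ?B k) - h *\<^sub>R (f (?F m) (\<theta> N m) - f (?B k) (\<theta> N m))"
      unfolding Fs Bs by (simp add: algebra_simps)
    have d1: "norm (?F m - ?F (Suc m)) \<le> h * Cf"
    proof -
      have "norm (?F m - ?F (Suc m)) = h * norm (f (?F m) (\<theta> N m))"
        unfolding Fs using h0 by simp
      then show ?thesis using bound_f[OF N mN, of "?F m"] h0 by (simp add: mult_left_mono)
    qed
    have "norm (?F m - ?B k) \<le> norm (?F m - ?F (Suc m)) + norm (?F (Suc m) - ?B k)"
      by (metis diff_add_cancel norm_triangle_ineq add_diff_eq)
    also have "\<dots> \<le> h * Cf + h * Cf * ((1 + h * Lf) ^ k - 1)" using d1 IH by linarith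
    finally have d2: "norm (?F m - ?B k) \<le> h * Cf * (1 + h * Lf) ^ k" by (simp add: algebra_simps)
    have d3: "norm (f (?F m) (\<theta> N m) - f (?B k) (\<theta> N m)) \<le> Lf * (h * Cf * (1 + h * Lf) ^ k)"
      using lip[OF mN, of "?F m" "?B k"] d2 L0 by (meson mult_left_mono order_trans)
    have "norm (?F m - ?B (Suc k)) \<le> norm (?F (Suc m) - ?B k) + h * norm (f (?F m) (\<theta> N m) - f (?B k) (\<theta> N m))"
      unfolding eq using norm_triangle_ineq4 h0 by (metis abs_of_pos norm_scaleR)
    also have "\<dots> \<le> h * Cf * ((1 + h * Lf) ^ k - 1) + h * (Lf * (h * Cf * (1 + h * Lf) ^ k))"
      using IH d3 h0 by (meson add_mono mult_left_mono less_imp_le)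
    also have "\<dots> = h * Cf * ((1 + h * Lf) ^ Suc k - 1)" by (simp add: algebra_simps)
    finally show ?case using m_def by simp
  qed
  have k: "N - n \<le> N" by simp
  have e: "norm (?F n - rec_iter f (\<theta> N) N x0 n) \<le> h * Cf * ((1 + h * Lf) ^ (N - n) - 1)"
    using main[OF k] nN by (simp add: rec_iter_def)
  have p1: "(1 + h * Lf) ^ (N - n) \<le> (1 + h * Lf) ^ N"
    using h0 L0 by (intro power_increasing) auto
  have p2: "(1 + h * Lf) ^ N \<le> exp (h * Lf) ^ N"
    using h0 L0 by (intro power_mono) (auto simp: exp_ge_add_one_self)
  have p3: "exp (h * Lf) ^ N = exp Lf" using N by (simp add: h_def exp_of_nat_mult[symmetric])
  have "h * Cf * ((1 + h * Lf) ^ (N - n) - 1) \<le> h * Cf * (exp Lf - 1)"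
    using p1 p2 p3 h0 C0 by (intro mult_left_mono) auto
  with e show "norm (?F n - rec_iter f (\<theta> N) N x0 n) \<le> (exp Lf - 1) * Cf / real N + 0 / (real N)^2"
    by (simp add: h_def mult.commute)
qed

end
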